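(* Let $N=1$. For every $k>2L$, every window string $\vec n=(n_1,\dots,n_k)$ with $L\ge n_1\ge\cdots\ge n_k\ge1$ and every $\mu\in\{0,1\}^{k-1}$, there exists an index $i$ with $2\le i\le k-1$ and $n_{i-1}=n_i=n_{i+1}$, and consequently $$\mathbf{T}^{(k)}_{\mu}(\vec n)=c\,\mathbf{T}^{(k-2)}_{\mu'}(\vec n')$$ for a scalar $c$ depending only on $k,i,\mu$ (independent of $U_1,\dots,U_L$ and $\tilde O$), where $\vec n'$ is $\vec n$ with the entries $n_{i-1},n_i$ deleted and $\mu'$ is $\mu$ with its $(i-1)$-th and $i$-th entries deleted. In particular every control tensor of order $k>2L$ is contractible to one of order $k-2$, so all single-qubit control tensors reduce to those of order at most $2L$.
   Context: Fix integers $L\ge 1$ and $N\ge 1$, and a set $Q$ of $N$ qubit labels. For $q\in Q$ let $\sigma_z^{[q]}$ denote the Pauli-$Z$ operator acting on qubit $q$ tensored with the identity on all other qubits of $(\mathbb{C}^2)^{\otimes N}$. (Digital control) Let $U_1,\dots,U_L$ be arbitrary unitaries on $(\mathbb{C}^2)^{\otimes N}$ ($U_n$ is the control propagator, constant on the $n$-th time window), and let $\tilde O$ be an arbitrary Hermitian unitary operator on $(\mathbb{C}^2)^{\otimes N}$ (the toggling-frame observable). For $q\in Q$ and $n\in\{1,\dots,L\}$ define $\tilde h_q(n)=U_n^\dagger\sigma_z^{[q]}U_n$ and $\bar h_q(n)=-\tilde O^{-1}\tilde h_q(n)\tilde O$. For $k\ge1$, a window string $\vec n=(n_1,\dots,n_k)$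 with $L\ge n_1\ge\cdots\ge n_k\ge1$, a qubit string $\vec q=(q_1,\dots,q_k)\in Q^k$ and a sign string $\mu\in\{0,1\}^{k-1}$, the (window-framed) control tensor is $$\mathbf{T}^{(k)}_{\vec q;\mu}(\vec n)=\sum_{b\in\{0,1\}^k}(-1)^{\sum_{j=1}^{k-1}\mu_j b_{j+1}}\Big(\prod^{\downarrow}_{i:\,b_i=1}\bar h_{q_i}(n_i)\Big)\Big(\prod^{\uparrow}_{i:\,b_i=0}\tilde h_{q_i}(n_i)\Big),$$ where $\prod^{\downarrow}$ is the ordered product with the index $i$ decreasing from left to right, $\prod^{\uparrow}$ is the ordered product with $i$ increasing from left to right, and an empty product is the identity. When $N=1$ the qubit string is omitted and we write $\mathbf{T}^{(k)}_{\mu}(\vec n)$. *)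

theory Defs
  imports "HOL-Analysis.Analysis"
begin

text \<open>Single qubit (N = 1): operators on C^2 are complex 2x2 matrices.\<close>

type_synonym cmat2 = "complex ^ 2 ^ 2"

definition cadj :: "cmat2 \<Rightarrow> cmat2" where
  "cadj A = (\<chi> i j. cnj (A $ j $ i))"

definition unitary2 :: "cmat2 \<Rightarrow> bool" where
  "unitary2 U \<longleftrightarrow> cadj U ** U = mat 1 \<and> U ** cadj U = mat 1"

definition hermitian2 :: "cmat2 \<Rightarrow> bool" where
  "hermitian2 A \<longleftrightarrow> cadj A = A"

definition sigma_z :: cmat2 where
  "sigma_z = (\<chi> i j. if i = j then (if i = 1 then 1 else -1) else 0)"

definition cscale :: "complex \<Rightarrow> cmat2 \<Rightarrow> cmat2" where
  "cscale c A = (\<chi> i j. c * A $ i $ j)"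

definition htil :: "(nat \<Rightarrow> cmat2) \<Rightarrow> nat \<Rightarrow> cmat2" where
  "htil U n = cadj (U n) ** sigma_z ** U n"

definition hbar :: "(nat \<Rightarrow> cmat2) \<Rightarrow> cmat2 \<Rightarrow> nat \<Rightarrow> cmat2" where
  "hbar U Om n = - (matrix_inv Om ** htil U n ** Om)"

text \<open>Lists are 0-indexed: ns ! (i-1) is n_i,
  mu ! (j-1) is mu_j (True = 1), b ! (i-1) is b_i.
  The product over b_i = 1 has index decreasing left to right, the product over
  b_i = 0 has index increasing left to right.\<close>
definition ctensor :: "(nat \<Rightarrow> cmat2) \<Rightarrow> cmat2 \<Rightarrow> bool list \<Rightarrow> nat list \<Rightarrow> cmat2" where
  "ctensor U Om mu ns =
    (let k = length ns in
     \<Sum>b\<in>{b :: bool list. length b = k}.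
        cscale ((-1) ^ (\<Sum>j<k-1. of_bool (mu ! j) * of_bool (b ! (j+1))))
          (foldr (\<lambda>i acc. hbar U Om (ns ! i) ** acc) (filter (\<lambda>i. b ! i) (rev [0..<k])) (mat 1)
           ** foldr (\<lambda>i acc. htil U (ns ! i) ** acc) (filter (\<lambda>i. \<not> b ! i) [0..<k]) (mat 1)))"

end

theory Submission imports Defs begin


lemma cadj_mul_eq: "unitary2 U \<Longrightarrow> cadj U ** U = mat 1" by (simp add: unitary2_def)

lemma sz_sq: "sigma_z ** sigma_z = mat 1"
  by (simp add: vec_eq_iff matrix_matrix_mult_def sigma_z_def mat_def sum_2 forall_2)

lemma neg_mul_neg: "(- A) ** (- B) = (A::cmat2) ** B"
  by (simp add: vec_eq_iff matrix_matrix_mult_def sum_negf)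

lemma htil_sq: assumes "unitary2 (U n)" shows "htil U n ** htil U n = mat 1"
proof -
  have a: "U n ** cadj (U n) = mat 1" using assms by (simp add: unitary2_def)
  have b: "cadj (U n) ** U n = mat 1" using assms by (simp add: unitary2_def)
  have "htil U n ** htil U n = cadj (U n) ** (sigma_z ** ((U n ** cadj (U n)) ** sigma_z) ** U n)"
    by (simp add: htil_def matrix_mul_assoc)
  also have "\<dots> = mat 1" using a b by (simp add: sz_sq)
  finally show ?thesis .
qed

lemma hbar_sq: assumes "unitary2 (U n)" "unitary2 Om" shows "hbar U Om n ** hbar U Om n = mat 1"
proof -
  have "invertible Om" using assms(2) unfolding invertible_def unitary2_def by blast
  then have "Om ** matrix_inv Om = mat 1 \<and> matrix_inv Om ** Om = mat 1"
    unfolding invertible_def matrix_inv_def by (rule someI_ex)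
  then have a: "Om ** matrix_inv Om = mat 1" and b: "matrix_inv Om ** Om = mat 1" by auto
  have "hbar U Om n ** hbar U Om n = matrix_inv Om ** (htil U n ** ((Om ** matrix_inv Om) ** htil U n) ** Om)"
    by (simp add: hbar_def neg_mul_neg matrix_mul_assoc)
  also have "\<dots> = mat 1" using a b htil_sq[of U n, OF assms(1)] by simp
  finally show ?thesis .
qed



definition mp :: "cmat2 list \<Rightarrow> cmat2" where "mp xs = foldr (**) xs (mat 1)"
definition fb :: "(nat \<Rightarrow> cmat2) \<Rightarrow> cmat2 \<Rightarrow> nat \<Rightarrow> bool \<Rightarrow> cmat2" where
  "fb U Om n x = (if x then hbar U Om n else mat 1)"
definition ft :: "(nat \<Rightarrow> cmat2) \<Rightarrow> nat \<Rightarrow> bool \<Rightarrow> cmat2" where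
  "ft U n x = (if x then mat 1 else htil U n)"
definition gg :: "bool \<times> bool \<Rightarrow> nat" where "gg p = of_bool (fst p) * of_bool (snd p)"

definition TT :: "(nat \<Rightarrow> cmat2) \<Rightarrow> cmat2 \<Rightarrow> bool list \<Rightarrow> nat list \<Rightarrow> cmat2" where
  "TT U Om mu0 ns = (\<Sum>b\<in>{b :: bool list. length b = length ns}.
     cscale ((-1) ^ sum_list (map gg (zip mu0 b)))
       (mp (rev (map2 (fb U Om) ns b)) ** mp (map2 (ft U) ns b)))"

lemma mp_append: "mp (xs @ ys) = mp xs ** mp ys"
  by (induction xs) (auto simp: mp_def matrix_mul_assoc)

lemma foldr_filter: "foldr (\<lambda>i acc. f i ** acc) (filter P xs) (mat 1) = mp (map (\<lambda>i. if P i then f i else mat 1) xs)"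
  by (induction xs) (auto simp: mp_def)

lemma exp_eq:
  assumes "length b = k" "length mu = k - 1"
  shows "(\<Sum>j<k-1. of_bool (mu ! j) * of_bool (b ! (j+1))) = sum_list (map gg (zip (False # mu) b))"
proof (cases b)
  case Nil then show ?thesis using assms by simp
next
  case (Cons x b')
  have "sum_list (map gg (zip mu b')) = (\<Sum>j<k-1. gg (zip mu b' ! j))"
    using assms Cons by (simp add: sum_list_sum_nth atLeast0LessThan)
  also have "\<dots> = (\<Sum>j<k-1. of_bool (mu ! j) * of_bool (b ! (j+1)))"
    using assms Cons by (intro sum.cong refl) (simp add: gg_def nth_zip)
  finally show ?thesis using assms Cons by (simp add: gg_def)
qed

lemma ctensor_TT:
  assumes "length mu = length ns - 1"
  shows "ctensor U Om mu ns = TT U Om (False # mu) ns"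
  unfolding ctensor_def TT_def Let_def
proof (rule sum.cong[OF refl])
  fix b assume "b \<in> {b :: bool list. length b = length ns}"
  then have lb: "length b = length ns" by simp
  have 1: "map (\<lambda>i. if b ! i then hbar U Om (ns ! i) else mat 1) [0..<length ns] = map2 (fb U Om) ns b"
    using lb by (intro nth_equalityI) (auto simp: fb_def)
  have 2: "map (\<lambda>i. if \<not> b ! i then htil U (ns ! i) else mat 1) [0..<length ns] = map2 (ft U) ns b"
    using lb by (intro nth_equalityI) (auto simp: ft_def)
  show "cscale ((-1) ^ (\<Sum>j<length ns - 1. of_bool (mu ! j) * of_bool (b ! (j+1))))
          (foldr (\<lambda>i acc. hbar U Om (ns ! i) ** acc) (filter (\<lambda>i. b ! i) (rev [0..<length ns])) (mat 1)
           ** foldr (\<lambda>i acc. htil U (ns ! i) ** acc) (filter (\<lambda>i. \<not> b ! i) [0..<length ns]) (mat 1))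
        = cscale ((-1) ^ sum_list (map gg (zip (False # mu) b)))
       (mp (rev (map2 (fb U Om) ns b)) ** mp (map2 (ft U) ns b))"
    unfolding foldr_filter rev_map[symmetric] 1 2 exp_eq[OF lb assms] ..
qed

lemma finite_len: "finite {b :: bool list. length b = n}"
  using finite_lists_length_eq[of "UNIV :: bool set" n] by simp

lemma sum_split:
  "(\<Sum>b\<in>{b :: bool list. length b = m + n}. f b) =
   (\<Sum>u\<in>{u :: bool list. length u = m}. \<Sum>v\<in>{v :: bool list. length v = n}. f (u @ v))"
proof -
  have e: "{b :: bool list. length b = m + n} = (\<lambda>(u,v). u @ v) ` ({u. length u = m} \<times> {v. length v = n})"
  proof (rule set_eqI, rule iffI)
    fix b :: "bool list" assume "b \<in> {b. length b = m + n}"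
    then show "b \<in> (\<lambda>(u,v). u @ v) ` ({u. length u = m} \<times> {v. length v = n})"
      by (intro image_eqI[of _ _ "(take m b, drop m b)"]) auto
  qed auto
  have i: "inj_on (\<lambda>(u,v). u @ v) ({u :: bool list. length u = m} \<times> {v :: bool list. length v = n})"
    by (auto simp: inj_on_def)
  show ?thesis unfolding e sum.reindex[OF i] sum.cartesian_product by (simp add: split_def)
qed

lemma sum_len_Suc:
  "(\<Sum>b\<in>{b :: bool list. length b = Suc n}. f b) =
   (\<Sum>b\<in>{b :: bool list. length b = n}. f (True # b)) + (\<Sum>b\<in>{b :: bool list. length b = n}. f (False # b))"
proof -
  have e: "{b :: bool list. length b = Suc n} = Cons True ` {b. length b = n} \<union> Cons False ` {b. length b = n}"
    by (auto simp: length_Suc_conv)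
  show ?thesis unfolding e
    by (subst sum.union_disjoint) (auto simp: finite_len sum.reindex)
qed

lemma sum_len_0: "(\<Sum>b\<in>{b :: bool list. length b = 0}. f b) = f []" by simp

lemma cscale_sum: "cscale c (sum f A) = (\<Sum>x\<in>A. cscale c (f x))"
  by (simp add: vec_eq_iff cscale_def sum_component sum_distrib_left)



lemma mp_Cons: "mp (x # xs) = x ** mp xs" by (simp add: mp_def)
lemma mp_Nil: "mp [] = mat 1" by (simp add: mp_def)

lemma cancel2: "A ** A = mat 1 \<Longrightarrow> A ** (A ** (Z::cmat2)) = Z"
  by (simp add: matrix_mul_assoc)

lemma local_eq:
  assumes hb: "hbar U Om n ** hbar U Om n = mat 1" and ht: "htil U n ** htil U n = mat 1"
  and lA: "length MA = length nA" and lC: "length MC = length nC"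
  and lu: "length u = length nA" and lw: "length w = length nC"
  shows "(\<Sum>v\<in>{v :: bool list. length v = 3}.
     cscale ((-1) ^ sum_list (map gg (zip (MA @ [m1,m2,m3] @ MC) (u @ v @ w))))
       (mp (rev (map2 (fb U Om) (nA @ [n,n,n] @ nC) (u @ v @ w))) ** mp (map2 (ft U) (nA @ [n,n,n] @ nC) (u @ v @ w))))
   = cscale (if m1 = m2 \<and> m2 = m3 then 4 else 0) (\<Sum>v\<in>{v :: bool list. length v = 1}.
     cscale ((-1) ^ sum_list (map gg (zip (MA @ [m1] @ MC) (u @ v @ w))))
       (mp (rev (map2 (fb U Om) (nA @ [n] @ nC) (u @ v @ w))) ** mp (map2 (ft U) (nA @ [n] @ nC) (u @ v @ w))))"
  using lA lC lu lw
  apply (simp add: numeral_3_eq_3 sum_len_Suc zip_append mp_append mp_Cons mp_Nil fb_def ft_def gg_def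
     matrix_mul_assoc[symmetric] cancel2[OF hb] cancel2[OF ht])
  apply (simp add: vec_eq_iff cscale_def)
  done

lemma core:
  assumes hb: "hbar U Om n ** hbar U Om n = mat 1" and ht: "htil U n ** htil U n = mat 1"
  and lA: "length MA = length nA" and lC: "length MC = length nC"
  shows "TT U Om (MA @ [m1,m2,m3] @ MC) (nA @ [n,n,n] @ nC) =
    cscale (if m1 = m2 \<and> m2 = m3 then 4 else 0) (TT U Om (MA @ [m1] @ MC) (nA @ [n] @ nC))"
proof -
  let ?A = "{u :: bool list. length u = length nA}"
  let ?C = "{u :: bool list. length u = length nC}"
  let ?V3 = "{u :: bool list. length u = 3}"
  let ?V1 = "{u :: bool list. length u = 1}"
  let ?c = "if m1 = m2 \<and> m2 = m3 then (4::complex) else 0"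
  define F where "F b = cscale ((-1) ^ sum_list (map gg (zip (MA @ [m1,m2,m3] @ MC) b)))
       (mp (rev (map2 (fb U Om) (nA @ [n,n,n] @ nC) b)) ** mp (map2 (ft U) (nA @ [n,n,n] @ nC) b))" for b
  define G where "G b = cscale ((-1) ^ sum_list (map gg (zip (MA @ [m1] @ MC) b)))
       (mp (rev (map2 (fb U Om) (nA @ [n] @ nC) b)) ** mp (map2 (ft U) (nA @ [n] @ nC) b))" for b
  have l1: "length (nA @ [n,n,n] @ nC) = length nA + (3 + length nC)" by simp
  have l2: "length (nA @ [n] @ nC) = length nA + (1 + length nC)" by simp
  have "TT U Om (MA @ [m1,m2,m3] @ MC) (nA @ [n,n,n] @ nC) = (\<Sum>u\<in>?A. \<Sum>v\<in>?V3. \<Sum>w\<in>?C. F (u @ v @ w))"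
    unfolding TT_def l1 sum_split F_def by simp
  also have "\<dots> = (\<Sum>u\<in>?A. \<Sum>w\<in>?C. \<Sum>v\<in>?V3. F (u @ v @ w))"
    by (simp add: sum.swap[of _ ?V3])
  also have "\<dots> = (\<Sum>u\<in>?A. \<Sum>w\<in>?C. cscale ?c (\<Sum>v\<in>?V1. G (u @ v @ w)))"
    unfolding F_def G_def using local_eq[OF hb ht lA lC] by (intro sum.cong refl) auto
  also have "\<dots> = cscale ?c (\<Sum>u\<in>?A. \<Sum>v\<in>?V1. \<Sum>w\<in>?C. G (u @ v @ w))"
    unfolding cscale_sum by (rule sum.cong[OF refl], rule sum.swap)
  also have "(\<Sum>u\<in>?A. \<Sum>v\<in>?V1. \<Sum>w\<in>?C. G (u @ v @ w)) = TT U Om (MA @ [m1] @ MC) (nA @ [n] @ nC)"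
    unfolding TT_def l2 sum_split G_def by simp
  finally show ?thesis .
qed



lemma drop3: assumes "j + 3 \<le> length xs"
  shows "drop j xs = [xs!j, xs!Suc j, xs!Suc(Suc j)] @ drop (j+3) xs"
proof -
  have a: "drop j xs = xs!j # drop (Suc j) xs" using assms by (simp add: Cons_nth_drop_Suc)
  have b: "drop (Suc j) xs = xs!Suc j # drop (Suc (Suc j)) xs" using assms by (simp add: Cons_nth_drop_Suc)
  have c: "drop (Suc (Suc j)) xs = xs!Suc (Suc j) # drop (Suc (Suc (Suc j))) xs" using assms by (simp add: Cons_nth_drop_Suc)
  show ?thesis using a b c by (simp add: numeral_3_eq_3)
qed

lemma triple:
  assumes "k > 2 * L" "length ns = k"
    "\<forall>j. 0 < j \<and> j < k \<longrightarrow> ns ! j \<le> ns ! (j - 1)"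
    "\<forall>j<k. 1 \<le> ns ! j \<and> ns ! j \<le> L"
  shows "\<exists>i. 2 \<le> i \<and> i \<le> k - 1 \<and> ns ! (i - 2) = ns ! (i - 1) \<and> ns ! (i - 1) = ns ! i"
proof (rule ccontr)
  assume na: "\<not> ?thesis"
  have step: "ns ! (j+2) < ns ! j" if "j + 2 < k" for j
  proof -
    have a: "ns ! (j+1) \<le> ns ! j" using assms(3)[rule_format, of "j+1"] that by simp
    have b: "ns ! (j+2) \<le> ns ! (j+1)" using assms(3)[rule_format, of "j+2"] that by simp
    have "\<not> (ns ! j = ns ! (j+1) \<and> ns ! (j+1) = ns ! (j+2))"
      proof
      assume "ns ! j = ns ! (j+1) \<and> ns ! (j+1) = ns ! (j+2)"
      then have "2 \<le> j+2 \<and> j+2 \<le> k-1 \<and> ns!(j+2-2) = ns!(j+2-1) \<and> ns!(j+2-1) = ns!(j+2)" using that by simp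
      then show False using na by blast
    qed
    then show ?thesis using a b by linarith
  qed
  have ind: "2 * t < k \<longrightarrow> ns ! (2 * t) + t \<le> ns ! 0" for t
  proof (induction t)
    case 0 then show ?case by simp
  next
    case (Suc t)
    show ?case
    proof
      assume h: "2 * Suc t < k"
      then have "ns ! (2 * t + 2) < ns ! (2 * t)" using step[of "2*t"] by simp
      moreover have "ns ! (2 * t) + t \<le> ns ! 0" using Suc h by simp
      ultimately show "ns ! (2 * Suc t) + Suc t \<le> ns ! 0" by (simp add: mult_2)
    qed
  qed
  have "ns ! (2 * L) + L \<le> ns ! 0" using ind[of L] assms(1) by simp
  moreover have "ns ! 0 \<le> L" "1 \<le> ns ! (2 * L)" using assms(1,4) by auto
  ultimately show False by simp
qed

theorem mainTheorem3:
  fixes L :: nat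
  assumes "L \<ge> 1"
  shows "\<exists>c :: nat \<Rightarrow> nat \<Rightarrow> bool list \<Rightarrow> complex.
    \<forall>k (ns :: nat list) (mu :: bool list).
      k > 2 * L \<and> length ns = k \<and> length mu = k - 1 \<and>
      (\<forall>j. 0 < j \<and> j < k \<longrightarrow> ns ! j \<le> ns ! (j - 1)) \<and>
      (\<forall>j<k. 1 \<le> ns ! j \<and> ns ! j \<le> L)
      \<longrightarrow>
      (\<exists>i. 2 \<le> i \<and> i \<le> k - 1 \<and>
           ns ! (i - 2) = ns ! (i - 1) \<and> ns ! (i - 1) = ns ! i \<and>
           (\<forall>(U :: nat \<Rightarrow> cmat2) (Om :: cmat2).
              (\<forall>n\<in>{1..L}. unitary2 (U n)) \<and> hermitian2 Om \<and> unitary2 Om \<longrightarrow>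
              ctensor U Om mu ns =
                cscale (c k i mu)
                  (ctensor U Om (take (i - 2) mu @ drop i mu) (take (i - 2) ns @ drop i ns))))"
proof (rule exI[of _ "\<lambda>(k::nat) i mu. if (False#mu)!(i-2) = (False#mu)!(i-1) \<and> (False#mu)!(i-1) = (False#mu)!i then (4::complex) else 0"], intro allI impI)
  fix k :: nat and ns :: "nat list" and mu :: "bool list"
  let ?c = "\<lambda>(k::nat) i mu. if (False#mu)!(i-2) = (False#mu)!(i-1) \<and> (False#mu)!(i-1) = (False#mu)!i then (4::complex) else 0"
  assume H: "k > 2 * L \<and> length ns = k \<and> length mu = k - 1 \<and>
      (\<forall>j. 0 < j \<and> j < k \<longrightarrow> ns ! j \<le> ns ! (j - 1)) \<and>
      (\<forall>j<k. 1 \<le> ns ! j \<and> ns ! j \<le> L)"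
  then have lns: "length ns = k" and lmu: "length mu = k - 1" and bnd: "\<forall>j<k. 1 \<le> ns ! j \<and> ns ! j \<le> L" by auto
  obtain i where i: "2 \<le> i" "i \<le> k - 1" "ns ! (i - 2) = ns ! (i - 1)" "ns ! (i - 1) = ns ! i"
    using triple[of L k ns] H by blast
  obtain j where ij: "i = Suc (Suc j)" using i(1) by (metis add_2_eq_Suc le_Suc_ex)
  define n where "n = ns ! Suc j"
  define mu0 where "mu0 = False # mu"
  have jk: "j + 3 \<le> k" using i(2) ij by simp
  have e3: "ns ! j = n" "ns ! Suc (Suc j) = n" using i ij n_def by auto
  have dn: "drop j ns = [ns!j, ns!Suc j, ns!Suc(Suc j)] @ drop (j+3) ns"
    using jk lns by (intro drop3) simp
  have nsd: "ns = take j ns @ [n,n,n] @ drop (j+3) ns"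
    using dn e3 n_def by (metis append_take_drop_id)
  have nsd': "take (i-2) ns @ drop i ns = take j ns @ [n] @ drop (j+3) ns"
    proof -
    have "drop (Suc (Suc j)) ns = ns ! Suc (Suc j) # drop (Suc (Suc (Suc j))) ns"
      using jk lns by (simp add: Cons_nth_drop_Suc)
    then show ?thesis using e3 ij by (simp add: numeral_3_eq_3)
  qed
  have lmu0: "length mu0 = k" using lmu jk mu0_def by simp
  have dm: "drop j mu0 = [mu0!j, mu0!Suc j, mu0!Suc(Suc j)] @ drop (j+3) mu0"
    using jk lmu0 by (intro drop3) simp
  have mud: "mu0 = take j mu0 @ [mu0!j, mu0!Suc j, mu0!Suc(Suc j)] @ drop (j+3) mu0"
    using dm by (metis append_take_drop_id)
  have mud': "False # (take (i-2) mu @ drop i mu) = take j mu0 @ [mu0!j] @ drop (j+3) mu0"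
  proof (cases j)
    case 0 then show ?thesis using ij mu0_def by (simp add: numeral_2_eq_2)
  next
    case (Suc j')
    have "take (Suc j') mu = take j' mu @ [mu ! j']" using jk lmu Suc by (simp add: take_Suc_conv_app_nth)
    then show ?thesis using ij mu0_def Suc by (simp add: numeral_3_eq_3)
  qed
  show "\<exists>i. 2 \<le> i \<and> i \<le> k - 1 \<and>
           ns ! (i - 2) = ns ! (i - 1) \<and> ns ! (i - 1) = ns ! i \<and>
           (\<forall>(U :: nat \<Rightarrow> cmat2) (Om :: cmat2).
              (\<forall>n\<in>{1..L}. unitary2 (U n)) \<and> hermitian2 Om \<and> unitary2 Om \<longrightarrow>
              ctensor U Om mu ns =
                cscale (?c k i mu)
                  (ctensor U Om (take (i - 2) mu @ drop i mu) (take (i - 2) ns @ drop i ns)))"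
  proof (intro exI conjI allI impI)
    show "2 \<le> i" "i \<le> k - 1" "ns ! (i - 2) = ns ! (i - 1)" "ns ! (i - 1) = ns ! i" using i by auto
    fix U Om assume UO: "(\<forall>n\<in>{1..L}. unitary2 (U n)) \<and> hermitian2 Om \<and> unitary2 Om"
    have "n \<in> {1..L}" using bnd jk n_def by auto
    then have un: "unitary2 (U n)" using UO by auto
    have hb: "hbar U Om n ** hbar U Om n = mat 1" using hbar_sq[of U n Om] un UO by auto
    have ht: "htil U n ** htil U n = mat 1" using htil_sq[of U n] un by auto
    have lA: "length (take j mu0) = length (take j ns)" using lns lmu0 by simp
    have lC: "length (drop (j+3) mu0) = length (drop (j+3) ns)" using lns lmu0 by simp
    have "ctensor U Om mu ns = TT U Om mu0 ns" using ctensor_TT lmu lns mu0_def by auto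
    also have "\<dots> = TT U Om (take j mu0 @ [mu0!j, mu0!Suc j, mu0!Suc(Suc j)] @ drop (j+3) mu0)
                  (take j ns @ [n,n,n] @ drop (j+3) ns)"
      using mud nsd by simp
    also have "\<dots> = cscale (?c k i mu) (TT U Om (take j mu0 @ [mu0!j] @ drop (j+3) mu0) (take j ns @ [n] @ drop (j+3) ns))"
      using core[OF hb ht lA lC] ij mu0_def by simp
    also have "TT U Om (take j mu0 @ [mu0!j] @ drop (j+3) mu0) (take j ns @ [n] @ drop (j+3) ns)
       = ctensor U Om (take (i - 2) mu @ drop i mu) (take (i - 2) ns @ drop i ns)"
      unfolding mud'[symmetric] nsd'[symmetric] using lmu lns jk ij by (subst ctensor_TT) auto
    finally show "ctensor U Om mu ns = cscale (?c k i mu)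
                  (ctensor U Om (take (i - 2) mu @ drop i mu) (take (i - 2) ns @ drop i ns))" .
  qed
qed

end
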